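(* Let $S: x=x(u,v)$, $(u,v)\in\mathcal D$, be a strongly regular Weingarten surface parameterized by principal parameters, with $\nu_1=f(\nu)$, $\nu_2=g(\nu)$, $\nu=\nu(u,v)$. Let $\Phi$ be an antiderivative of $f'/(f-g)$ and $\Psi$ an antiderivative of $g'/(g-f)$ on $\mathcal I$. Then the function $\lambda=\ln\{\sqrt E\,\exp(\Phi(\nu(u,v)))\}$ does not depend on $v$, and the function $\mu=\ln\{\sqrt G\,\exp(\Psi(\nu(u,v)))\}$ does not depend on $u$.
   Context: $E,F,G$ and $L,M,N$ are the coefficients of the first and second fundamental forms; principal parameters means $F=M=0$ and no umbilical points. Principal curvatures: $\nu_1=L/E$, $\nu_2=N/G$; principal geodesic curvatures: $\gamma_1=-\frac{E_v}{2E\sqrt G}$, $\gamma_2=\frac{G_u}{2G\sqrt E}$. $S$ is strongly regular if $(\nu_1-\nu_2)\gamma_1\gamma_2\neq0$ on $\mathcal D$, with the convention $\nu_1-\nu_2>0$. A strongly regular surface is Weingarten if there exist differentiable functions $f(\nu),g(\nu)$, $\nu\in\mathcal I\subseteq\mathbb R$, with $f-g>0$, $f'g'\neq0$, and a differentiable function $\nu(u,v)\in\mathcal I$ with $\nu_u\nu_v\neq0$ on $\mathcal D$, such that $\nu_1=f(\nu)$, $\nu_2=g(\nu)$. *)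

theory Defs
  imports "HOL-Analysis.Analysis" "HOL-Analysis.Cross3"
begin

definition pu :: "(real \<times> real \<Rightarrow> 'a::real_normed_vector) \<Rightarrow> real \<times> real \<Rightarrow> 'a" where
  "pu f p = vector_derivative (\<lambda>s. f (s, snd p)) (at (fst p))"

definition pv :: "(real \<times> real \<Rightarrow> 'a::real_normed_vector) \<Rightarrow> real \<times> real \<Rightarrow> 'a" where
  "pv f p = vector_derivative (\<lambda>s. f (fst p, s)) (at (snd p))"

fun Ck :: "nat \<Rightarrow> (real \<times> real \<Rightarrow> 'a::real_normed_vector) \<Rightarrow> (real \<times> real) set \<Rightarrow> bool" where
  "Ck 0 f D = continuous_on D f"
| "Ck (Suc k) f D =
     (continuous_on D f \<and>
      (\<forall>p\<in>D. (\<lambda>s. f (s, snd p)) differentiable (at (fst p)) \<and>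
             (\<lambda>s. f (fst p, s)) differentiable (at (snd p))) \<and>
      Ck k (pu f) D \<and> Ck k (pv f) D)"

definition unit_normal :: "(real \<times> real \<Rightarrow> real^3) \<Rightarrow> real \<times> real \<Rightarrow> real^3" where
  "unit_normal x p = (1 / norm (cross3 (pu x p) (pv x p))) *\<^sub>R (cross3 (pu x p) (pv x p))"

definition coefE :: "(real \<times> real \<Rightarrow> real^3) \<Rightarrow> real \<times> real \<Rightarrow> real" where
  "coefE x p = pu x p \<bullet> pu x p"
definition coefF :: "(real \<times> real \<Rightarrow> real^3) \<Rightarrow> real \<times> real \<Rightarrow> real" where
  "coefF x p = pu x p \<bullet> pv x p"
definition coefG :: "(real \<times> real \<Rightarrow> real^3) \<Rightarrow> real \<times> real \<Rightarrow> real" where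
  "coefG x p = pv x p \<bullet> pv x p"
definition coefL :: "(real \<times> real \<Rightarrow> real^3) \<Rightarrow> real \<times> real \<Rightarrow> real" where
  "coefL x p = pu (pu x) p \<bullet> unit_normal x p"
definition coefM :: "(real \<times> real \<Rightarrow> real^3) \<Rightarrow> real \<times> real \<Rightarrow> real" where
  "coefM x p = pv (pu x) p \<bullet> unit_normal x p"
definition coefN :: "(real \<times> real \<Rightarrow> real^3) \<Rightarrow> real \<times> real \<Rightarrow> real" where
  "coefN x p = pv (pv x) p \<bullet> unit_normal x p"

text \<open>Principal curvatures and principal geodesic curvatures (for principal parameters).\<close>
definition nu1 where "nu1 x p = coefL x p / coefE x p"
definition nu2 where "nu2 x p = coefN x p / coefG x p"
definition gamma1 where "gamma1 x p = - pv (coefE x) p / (2 * coefE x p * sqrt (coefG x p))"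
definition gamma2 where "gamma2 x p = pu (coefG x) p / (2 * coefG x p * sqrt (coefE x p))"

definition regular_surface :: "(real \<times> real \<Rightarrow> real^3) \<Rightarrow> (real \<times> real) set \<Rightarrow> bool" where
  "regular_surface x D \<longleftrightarrow> open D \<and> Ck 3 x D \<and> (\<forall>p\<in>D. cross3 (pu x p) (pv x p) \<noteq> 0)"

definition principal_params where
  "principal_params x D \<longleftrightarrow> (\<forall>p\<in>D. coefF x p = 0 \<and> coefM x p = 0 \<and> nu1 x p \<noteq> nu2 x p)"

definition strongly_regular where
  "strongly_regular x D \<longleftrightarrow>
     (\<forall>p\<in>D. (nu1 x p - nu2 x p) * gamma1 x p * gamma2 x p \<noteq> 0 \<and> nu1 x p - nu2 x p > 0)"

definition weingarten where
  "weingarten x D f f' g g' I nu \<longleftrightarrow>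
     open I \<and>
     (\<forall>t\<in>I. (f has_real_derivative f' t) (at t) \<and> (g has_real_derivative g' t) (at t) \<and>
             f t - g t > 0 \<and> f' t * g' t \<noteq> 0) \<and>
     (\<forall>p\<in>D. nu p \<in> I \<and>
             (\<lambda>s. nu (s, snd p)) differentiable (at (fst p)) \<and>
             (\<lambda>s. nu (fst p, s)) differentiable (at (snd p)) \<and>
             pu nu p * pv nu p \<noteq> 0 \<and>
             nu1 x p = f (nu p) \<and> nu2 x p = g (nu p))"

end

theory Submission
  imports Defs
begin


lemma dist_small:
  fixes u v t s h :: real
  assumes "0 \<le> t" "t \<le> h" "0 \<le> s" "s \<le> h" "h > 0"
  shows "dist (u+t, v+s) (u, v) < 3*h"
proof -
  have "dist (u+t, v+s) (u, v) = sqrt (t\<^sup>2 + s\<^sup>2)" by (simp add: dist_Pair_Pair dist_real_def)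
  also have "\<dots> \<le> \<bar>t\<bar> + \<bar>s\<bar>" by (rule sqrt_sum_squares_le_sum_abs)
  also have "\<dots> < 3*h" using assms by auto
  finally show ?thesis .
qed

lemma schwarz_real:
  fixes \<phi> \<phi>u \<phi>v \<phi>uv \<phi>vu :: "real \<times> real \<Rightarrow> real"
  assumes D: "open D" "p \<in> D"
  and du: "\<And>q. q\<in>D \<Longrightarrow> ((\<lambda>s. \<phi> (s, snd q)) has_real_derivative \<phi>u q) (at (fst q))"
  and dv: "\<And>q. q\<in>D \<Longrightarrow> ((\<lambda>s. \<phi> (fst q, s)) has_real_derivative \<phi>v q) (at (snd q))"
  and duv: "\<And>q. q\<in>D \<Longrightarrow> ((\<lambda>s. \<phi>u (fst q, s)) has_real_derivative \<phi>uv q) (at (snd q))"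
  and dvu: "\<And>q. q\<in>D \<Longrightarrow> ((\<lambda>s. \<phi>v (s, snd q)) has_real_derivative \<phi>vu q) (at (fst q))"
  and c1: "continuous_on D \<phi>uv" and c2: "continuous_on D \<phi>vu"
  shows "\<phi>uv p = \<phi>vu p"
proof (rule ccontr)
  assume ne: "\<phi>uv p \<noteq> \<phi>vu p"
  define e where "e = \<bar>\<phi>uv p - \<phi>vu p\<bar> / 2"
  have e: "e > 0" using ne by (simp add: e_def)
  obtain d1 where d1: "d1 > 0" "\<And>q. q \<in> D \<Longrightarrow> dist q p < d1 \<Longrightarrow> dist (\<phi>uv q) (\<phi>uv p) < e"
    using c1 D(2) e unfolding continuous_on_iff by blast
  obtain d2 where d2: "d2 > 0" "\<And>q. q \<in> D \<Longrightarrow> dist q p < d2 \<Longrightarrow> dist (\<phi>vu q) (\<phi>vu p) < e"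
    using c2 D(2) e unfolding continuous_on_iff by blast
  obtain r where r: "r > 0" "ball p r \<subseteq> D" using D open_contains_ball by blast
  obtain u v where p: "p = (u, v)" by (cases p)
  define h where "h = min r (min d1 d2) / 3"
  have h: "h > 0" using r d1 d2 by (simp add: h_def)
  have inD: "(u+t, v+s) \<in> D" and close: "dist (u+t, v+s) p < min r (min d1 d2)"
    if "0 \<le> t" "t \<le> h" "0 \<le> s" "s \<le> h" for t s
  proof -
    have "dist (u+t, v+s) (u, v) < 3*h" using dist_small that h by blast
    then show "dist (u+t, v+s) p < min r (min d1 d2)" using p h_def by simp
    then show "(u+t, v+s) \<in> D" using r by (auto simp: dist_commute)
  qed
  have inD': "(a, b) \<in> D" if "u \<le> a" "a \<le> u+h" "v \<le> b" "b \<le> v+h" for a b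
    using inD[of "a-u" "b-v"] that by simp
  have close': "dist (a, b) p < min r (min d1 d2)" if "u \<le> a" "a \<le> u+h" "v \<le> b" "b \<le> v+h" for a b
    using close[of "a-u" "b-v"] that by simp
  obtain t1 where t1: "u < t1" "t1 < u+h"
    "(\<phi>(u+h, v+h) - \<phi>(u+h, v)) - (\<phi>(u, v+h) - \<phi>(u, v)) = h * (\<phi>u (t1, v+h) - \<phi>u (t1, v))"
  proof -
    have "\<exists>z. u < z \<and> z < u+h \<and> (\<lambda>t. \<phi>(t, v+h) - \<phi>(t, v)) (u+h) - (\<lambda>t. \<phi>(t, v+h) - \<phi>(t, v)) u
           = (u+h-u) * (\<phi>u (z, v+h) - \<phi>u (z, v))"
    proof (rule MVT2)
      show "u < u+h" using h by simp
      fix t assume "u \<le> t" "t \<le> u+h"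
      then have "(t, v+h) \<in> D" "(t, v) \<in> D" using inD' h by auto
      from du[OF this(1)] du[OF this(2)]
      show "((\<lambda>t. \<phi>(t, v+h) - \<phi>(t, v)) has_real_derivative (\<phi>u (t, v+h) - \<phi>u (t, v))) (at t)"
        by (auto intro!: derivative_eq_intros)
    qed
    then show ?thesis using that by auto
  qed
  obtain s1 where s1: "v < s1" "s1 < v+h" "\<phi>u (t1, v+h) - \<phi>u (t1, v) = h * \<phi>uv (t1, s1)"
  proof -
    have "\<exists>z. v < z \<and> z < v+h \<and> (\<lambda>s. \<phi>u (t1, s)) (v+h) - (\<lambda>s. \<phi>u (t1, s)) v = (v+h-v) * \<phi>uv (t1, z)"
    proof (rule MVT2)
      show "v < v+h" using h by simp
      fix s assume "v \<le> s" "s \<le> v+h"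
      then have "(t1, s) \<in> D" using inD' t1 by auto
      from duv[OF this] show "((\<lambda>s. \<phi>u (t1, s)) has_real_derivative \<phi>uv (t1, s)) (at s)" by simp
    qed
    then show ?thesis using that by auto
  qed
  obtain s2 where s2: "v < s2" "s2 < v+h"
    "(\<phi>(u+h, v+h) - \<phi>(u, v+h)) - (\<phi>(u+h, v) - \<phi>(u, v)) = h * (\<phi>v (u+h, s2) - \<phi>v (u, s2))"
  proof -
    have "\<exists>z. v < z \<and> z < v+h \<and> (\<lambda>s. \<phi>(u+h, s) - \<phi>(u, s)) (v+h) - (\<lambda>s. \<phi>(u+h, s) - \<phi>(u, s)) v
           = (v+h-v) * (\<phi>v (u+h, z) - \<phi>v (u, z))"
    proof (rule MVT2)
      show "v < v+h" using h by simp
      fix s assume "v \<le> s" "s \<le> v+h"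
      then have "(u+h, s) \<in> D" "(u, s) \<in> D" using inD' h by auto
      from dv[OF this(1)] dv[OF this(2)]
      show "((\<lambda>s. \<phi>(u+h, s) - \<phi>(u, s)) has_real_derivative (\<phi>v (u+h, s) - \<phi>v (u, s))) (at s)"
        by (auto intro!: derivative_eq_intros)
    qed
    then show ?thesis using that by auto
  qed
  obtain t2 where t2: "u < t2" "t2 < u+h" "\<phi>v (u+h, s2) - \<phi>v (u, s2) = h * \<phi>vu (t2, s2)"
  proof -
    have "\<exists>z. u < z \<and> z < u+h \<and> (\<lambda>t. \<phi>v (t, s2)) (u+h) - (\<lambda>t. \<phi>v (t, s2)) u = (u+h-u) * \<phi>vu (z, s2)"
    proof (rule MVT2)
      show "u < u+h" using h by simp
      fix t assume "u \<le> t" "t \<le> u+h"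
      then have "(t, s2) \<in> D" using inD' s2 by auto
      from dvu[OF this] show "((\<lambda>t. \<phi>v (t, s2)) has_real_derivative \<phi>vu (t, s2)) (at t)" by simp
    qed
    then show ?thesis using that by auto
  qed
  have "h * (h * \<phi>uv (t1, s1)) = h * (h * \<phi>vu (t2, s2))"
    using t1(3) s1(3) s2(3) t2(3) by (smt (verit))
  then have eq: "\<phi>uv (t1, s1) = \<phi>vu (t2, s2)" using h by simp
  have q1: "(t1, s1) \<in> D" "dist (t1, s1) p < min r (min d1 d2)"
    using inD' close' t1 s1 by auto
  have q2: "(t2, s2) \<in> D" "dist (t2, s2) p < min r (min d1 d2)"
    using inD' close' t2 s2 by auto
  have "dist (\<phi>uv (t1, s1)) (\<phi>uv p) < e" using d1(2)[OF q1(1)] q1(2) by simp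
  moreover have "dist (\<phi>vu (t2, s2)) (\<phi>vu p) < e" using d2(2)[OF q2(1)] q2(2) by simp
  ultimately have "\<bar>\<phi>uv p - \<phi>vu p\<bar> < 2*e" using eq unfolding dist_real_def by linarith
  then show False using e_def by simp
qed



lemma decomp3:
  fixes a b w :: "real^3"
  shows "(norm (cross3 a b))\<^sup>2 *\<^sub>R w = ((b\<bullet>b)*(w\<bullet>a) - (a\<bullet>b)*(w\<bullet>b)) *\<^sub>R a
     + ((a\<bullet>a)*(w\<bullet>b) - (a\<bullet>b)*(w\<bullet>a)) *\<^sub>R b + (w \<bullet> cross3 a b) *\<^sub>R cross3 a b"
  unfolding power2_norm_eq_inner
  by (simp add: cross3_simps forall_3) algebra?

lemma core_codazzi:
  fixes xu xv n xuu xuv xvv xuuv nu nv :: "real^3"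
  assumes c: "cross3 xu xv \<noteq> 0" and nn: "n\<bullet>n = 1" "n\<bullet>xu = 0" "n\<bullet>xv = 0" and F: "xu\<bullet>xv = 0"
  and r1: "nv\<bullet>n = 0" "nv\<bullet>xu + n\<bullet>xuv = 0" "nv\<bullet>xv + n\<bullet>xvv = 0"
  and r2: "nu\<bullet>n = 0" "nu\<bullet>xv + n\<bullet>xuv = 0" "nu\<bullet>xu + n\<bullet>xuu = 0"
  and M: "xuv\<bullet>n = 0" and r3: "xuuv\<bullet>n + xuv\<bullet>nu = 0" and r4: "xuu\<bullet>xv + xu\<bullet>xuv = 0"
  shows "xuuv\<bullet>n + xuu\<bullet>nv = (xu\<bullet>xuv) * ((xuu\<bullet>n)/(xu\<bullet>xu) + (xvv\<bullet>n)/(xv\<bullet>xv))"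
proof -
  define C where "C = cross3 xu xv"
  define K where "K = (norm C)\<^sup>2"
  define E where "E = xu\<bullet>xu"
  define G where "G = xv\<bullet>xv"
  have xu0: "xu \<noteq> 0" and xv0: "xv \<noteq> 0" using c by auto
  have E: "E > 0" using xu0 by (simp add: E_def)
  have G: "G > 0" using xv0 by (simp add: G_def)
  have K: "K = E * G" using norm_cross_dot[of xu xv] F
    by (simp add: K_def C_def E_def G_def power2_norm_eq_inner power_mult_distrib)
  have dec: "K *\<^sub>R w = (G*(w\<bullet>xu)) *\<^sub>R xu + (E*(w\<bullet>xv)) *\<^sub>R xv + (w \<bullet> C) *\<^sub>R C" for w
    using decomp3[of xu xv w] F by (simp add: K_def C_def E_def G_def inner_commute)
  have Kn: "K *\<^sub>R n = (n \<bullet> C) *\<^sub>R C" using dec[of n] nn by (simp add: inner_commute)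
  have nC: "n \<bullet> C \<noteq> 0"
  proof
    assume "n \<bullet> C = 0"
    then have "K *\<^sub>R n = 0" using Kn by simp
    then show False using E G K nn(1) by auto
  qed
  have wC: "w \<bullet> C = 0" if "w \<bullet> n = 0" for w
  proof -
    have "K * (w \<bullet> n) = w \<bullet> (K *\<^sub>R n)" by simp
    also have "\<dots> = (n \<bullet> C) * (w \<bullet> C)" using Kn by simp
    finally show ?thesis using that nC by simp
  qed
  have f1: "nu\<bullet>xu = - (xuu\<bullet>n)" "nu\<bullet>xv = 0" "nv\<bullet>xv = - (xvv\<bullet>n)" "nv\<bullet>xu = 0"
    using r1 r2 M by (auto simp: inner_commute)
  have nu: "K *\<^sub>R nu = (- G * (xuu\<bullet>n)) *\<^sub>R xu"
    using dec[of nu] wC[OF r2(1)] f1 by simp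
  have nv: "K *\<^sub>R nv = (- E * (xvv\<bullet>n)) *\<^sub>R xv"
    using dec[of nv] wC[OF r1(1)] f1 by simp
  have a: "K * (xuv\<bullet>nu) = - G * (xuu\<bullet>n) * (xuv \<bullet> xu)"
  proof -
    have "K * (xuv\<bullet>nu) = xuv \<bullet> (K *\<^sub>R nu)" by simp
    then show ?thesis using nu by simp
  qed
  have b: "K * (xuu\<bullet>nv) = E * (xvv\<bullet>n) * (xu \<bullet> xuv)"
  proof -
    have "K * (xuu\<bullet>nv) = xuu \<bullet> (K *\<^sub>R nv)" by simp
    also have "\<dots> = - E * (xvv\<bullet>n) * (xuu \<bullet> xv)" using nv by simp
    also have "xuu \<bullet> xv = - (xu \<bullet> xuv)" using r4 by simp
    finally show ?thesis by simp
  qed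
  have "K * (xuuv\<bullet>n + xuu\<bullet>nv) = (xu\<bullet>xuv) * (G * (xuu\<bullet>n) + E * (xvv\<bullet>n))"
  proof -
    have "xuuv\<bullet>n = - (xuv\<bullet>nu)" using r3 by simp
    then have "K * (xuuv\<bullet>n + xuu\<bullet>nv) = - (K * (xuv\<bullet>nu)) + K * (xuu\<bullet>nv)"
      by (simp add: algebra_simps)
    also have "\<dots> = G * (xuu\<bullet>n) * (xuv \<bullet> xu) + E * (xvv\<bullet>n) * (xu \<bullet> xuv)" using a b by simp
    finally show ?thesis by (simp add: algebra_simps inner_commute)
  qed
  then show ?thesis using E G K unfolding E_def[symmetric] G_def[symmetric]
    by (simp add: field_simps)
qed

lemma final_step:
  fixes Ef Lf nuf h \<Phi> :: "real \<Rightarrow> real"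
  assumes S: "open S" "t \<in> S"
  and dE: "(Ef has_real_derivative Ed) (at t)" and dL: "(Lf has_real_derivative Ld) (at t)"
  and dn: "(nuf has_real_derivative nd) (at t)"
  and Epos: "\<And>s. s\<in>S \<Longrightarrow> Ef s > 0"
  and eq: "\<And>s. s\<in>S \<Longrightarrow> Lf s / Ef s = h (nuf s)"
  and dh: "(h has_real_derivative h') (at (nuf t))"
  and dP: "(\<Phi> has_real_derivative h' / (h (nuf t) - k)) (at (nuf t))"
  and hk: "h (nuf t) - k \<noteq> 0"
  and cod: "Ld = (Ed/2) * (Lf t / Ef t + k)"
  shows "((\<lambda>s. ln (sqrt (Ef s) * exp (\<Phi> (nuf s)))) has_real_derivative 0) (at t)"
proof -
  have Et: "Ef t > 0" using Epos S by blast
  have d1: "((\<lambda>s. Lf s / Ef s) has_real_derivative (Ld * Ef t - Lf t * Ed) / (Ef t * Ef t)) (at t)"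
    using dL dE Et by (intro DERIV_divide) auto
  have d1': "((\<lambda>s. h (nuf s)) has_real_derivative (Ld * Ef t - Lf t * Ed) / (Ef t * Ef t)) (at t)"
    by (rule has_field_derivative_transform_within_open[OF d1 S eq])
  have d2: "((\<lambda>s. h (nuf s)) has_real_derivative h' * nd) (at t)"
    using DERIV_chain2[OF dh dn] .
  have hn: "h' * nd = (Ld * Ef t - Lf t * Ed) / (Ef t * Ef t)" using DERIV_unique[OF d2 d1'] .
  have d3: "((\<lambda>s. ln (Ef s) / 2 + \<Phi> (nuf s)) has_real_derivative
             inverse (Ef t) * Ed / 2 + h' / (h (nuf t) - k) * nd) (at t)"
  proof -
    have "((\<lambda>s. ln (Ef s)) has_real_derivative inverse (Ef t) * Ed) (at t)"
      using DERIV_chain2[OF DERIV_ln[OF Et] dE] .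
    then have "((\<lambda>s. ln (Ef s) / 2) has_real_derivative inverse (Ef t) * Ed / 2) (at t)"
      by (rule DERIV_cdivide)
    from DERIV_add[OF this DERIV_chain2[OF dP dn]] show ?thesis .
  qed
  have d4: "((\<lambda>s. ln (sqrt (Ef s) * exp (\<Phi> (nuf s)))) has_real_derivative
             inverse (Ef t) * Ed / 2 + h' / (h (nuf t) - k) * nd) (at t)"
  proof (rule has_field_derivative_transform_within_open[OF d3 S])
    fix s assume "s \<in> S"
    then have "Ef s > 0" using Epos by blast
    then show "ln (Ef s) / 2 + \<Phi> (nuf s) = ln (sqrt (Ef s) * exp (\<Phi> (nuf s)))"
      by (simp add: ln_mult ln_sqrt)
  qed
  have r: "h (nuf t) = Lf t / Ef t" using eq S by simp
  have "inverse (Ef t) * Ed / 2 + h' / (h (nuf t) - k) * nd = 0"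
  proof -
    have "h' / (h (nuf t) - k) * nd = (h' * nd) / (h (nuf t) - k)" by simp
    also have "h' * nd = (Ed / (2 * Ef t)) * (k - h (nuf t))"
    proof -
      define A where "A = Ef t"
      define R where "R = h (nuf t)"
      have A: "A > 0" using Et A_def by simp
      have LA: "Lf t = R * A" using r A unfolding R_def A_def by simp
      have "h' * nd = (Ld * A - R * A * Ed) / (A * A)" using hn LA unfolding A_def by simp
      also have "\<dots> = (Ld - R * Ed) / A" using A by (simp add: divide_simps) (simp add: algebra_simps)
      also have "Ld = (Ed/2) * (R + k)" using cod r unfolding R_def by simp
      finally have "h' * nd = ((Ed/2) * (R + k) - R * Ed) / A" .
      also have "\<dots> = (Ed / (2 * A)) * (k - R)" using A by (simp add: divide_simps) (simp add: algebra_simps)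
      finally show ?thesis unfolding A_def R_def .
    qed
    finally have "h' / (h (nuf t) - k) * nd = - (Ed / (2 * Ef t))"
    proof -
      assume a: "h' / (h (nuf t) - k) * nd = (Ed / (2 * Ef t)) * (k - h (nuf t)) / (h (nuf t) - k)"
      have "(k - h (nuf t)) / (h (nuf t) - k) = -1" using hk by (simp add: divide_simps)
      then show ?thesis using a by (metis mult.right_neutral mult_minus_right times_divide_eq_right)
    qed
    moreover have "inverse (Ef t) * Ed / 2 = Ed / (2 * Ef t)" using Et by (simp add: field_simps)
    ultimately show ?thesis by simp
  qed
  then show ?thesis using d4 by simp
qed



lemma pu_works:
  "(\<lambda>s. y (s, snd q)) differentiable (at (fst q)) \<Longrightarrow>
   ((\<lambda>s. y (s, snd q)) has_vector_derivative pu y q) (at (fst q))"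
  unfolding pu_def using vector_derivative_works by blast

lemma pv_works:
  "(\<lambda>s. y (fst q, s)) differentiable (at (snd q)) \<Longrightarrow>
   ((\<lambda>s. y (fst q, s)) has_vector_derivative pv y q) (at (snd q))"
  unfolding pv_def using vector_derivative_works by blast

lemma comp_real_deriv:
  fixes f :: "real \<Rightarrow> real^'n"
  shows "(f has_vector_derivative f') (at t) \<Longrightarrow> ((\<lambda>s. f s $ i) has_real_derivative f' $ i) (at t)"
  unfolding has_real_derivative_iff_has_vector_derivative
  by (rule bounded_linear.has_vector_derivative[OF bounded_linear_vec_nth])

lemma schwarz_vec:
  fixes y :: "real \<times> real \<Rightarrow> real^'n"
  assumes D: "open D" "p \<in> D"
  and d1: "\<And>q. q\<in>D \<Longrightarrow> (\<lambda>s. y (s, snd q)) differentiable (at (fst q))"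
  and d2: "\<And>q. q\<in>D \<Longrightarrow> (\<lambda>s. y (fst q, s)) differentiable (at (snd q))"
  and d3: "\<And>q. q\<in>D \<Longrightarrow> (\<lambda>s. pu y (fst q, s)) differentiable (at (snd q))"
  and d4: "\<And>q. q\<in>D \<Longrightarrow> (\<lambda>s. pv y (s, snd q)) differentiable (at (fst q))"
  and c1: "continuous_on D (pv (pu y))" and c2: "continuous_on D (pu (pv y))"
  shows "pv (pu y) p = pu (pv y) p"
proof (subst vec_eq_iff, rule allI)
  fix i
  show "pv (pu y) p $ i = pu (pv y) p $ i"
  proof (rule schwarz_real[where \<phi>="\<lambda>q. y q $ i" and \<phi>u="\<lambda>q. pu y q $ i" and \<phi>v="\<lambda>q. pv y q $ i"
        and \<phi>uv="\<lambda>q. pv (pu y) q $ i" and \<phi>vu="\<lambda>q. pu (pv y) q $ i", OF D])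
    fix q assume q: "q \<in> D"
    show "((\<lambda>s. y (s, snd q) $ i) has_real_derivative pu y q $ i) (at (fst q))"
      by (rule comp_real_deriv[OF pu_works[OF d1[OF q]]])
    show "((\<lambda>s. y (fst q, s) $ i) has_real_derivative pv y q $ i) (at (snd q))"
      by (rule comp_real_deriv[OF pv_works[OF d2[OF q]]])
    have "((\<lambda>s. pu y (fst q, s)) has_vector_derivative pv (pu y) q) (at (snd q))"
      using pv_works[OF d3[OF q]] .
    then show "((\<lambda>s. pu y (fst q, s) $ i) has_real_derivative pv (pu y) q $ i) (at (snd q))"
      by (rule comp_real_deriv)
    have "((\<lambda>s. pv y (s, snd q)) has_vector_derivative pu (pv y) q) (at (fst q))"
      using pu_works[OF d4[OF q]] .
    then show "((\<lambda>s. pv y (s, snd q) $ i) has_real_derivative pu (pv y) q $ i) (at (fst q))"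
      by (rule comp_real_deriv)
  next
    show "continuous_on D (\<lambda>q. pv (pu y) q $ i)" using c1 by (intro continuous_intros)
    show "continuous_on D (\<lambda>q. pu (pv y) q $ i)" using c2 by (intro continuous_intros)
  qed
qed

lemma open_vline: "open (D::(real\<times>real) set) \<Longrightarrow> open {s. (u, s) \<in> D}"
proof -
  assume "open D"
  have "{s. (u, s) \<in> D} = (\<lambda>s. (u, s)) -` D" by auto
  moreover have "open ((\<lambda>s::real. (u, s)) -` D)"
    by (rule continuous_imp_open_vimage[OF _ open_UNIV \<open>open D\<close>]) (auto intro!: continuous_intros)
  ultimately show ?thesis by simp
qed

lemma open_uline: "open (D::(real\<times>real) set) \<Longrightarrow> open {s. (s, v) \<in> D}"
proof -
  assume "open D"
  have "{s. (s, v) \<in> D} = (\<lambda>s. (s, v)) -` D" by auto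
  moreover have "open ((\<lambda>s::real. (s, v)) -` D)"
    by (rule continuous_imp_open_vimage[OF _ open_UNIV \<open>open D\<close>]) (auto intro!: continuous_intros)
  ultimately show ?thesis by simp
qed

lemma inner_const_deriv:
  fixes f g :: "real \<Rightarrow> 'a::real_inner"
  assumes df: "(f has_vector_derivative f') (at t)" and dg: "(g has_vector_derivative g') (at t)"
    and S: "open S" "t \<in> S" and k: "\<And>s. s\<in>S \<Longrightarrow> f s \<bullet> g s = k"
  shows "f' \<bullet> g t + f t \<bullet> g' = 0"
proof -
  have d: "((\<lambda>s. f s \<bullet> g s) has_vector_derivative (f t \<bullet> g' + f' \<bullet> g t)) (at t)"
    by (rule bounded_bilinear.has_vector_derivative[OF bounded_bilinear_inner df dg])
  have d0: "((\<lambda>s. f s \<bullet> g s) has_vector_derivative 0) (at t)"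
    by (rule has_vector_derivative_transform_within_open[OF has_vector_derivative_const S]) (simp add: k)
  show ?thesis using vector_derivative_unique_at[OF d d0] by simp
qed

lemma inner_deriv:
  fixes f g :: "real \<Rightarrow> 'a::real_inner"
  assumes df: "(f has_vector_derivative f') (at t)" and dg: "(g has_vector_derivative g') (at t)"
  shows "((\<lambda>s. f s \<bullet> g s) has_real_derivative (f' \<bullet> g t + f t \<bullet> g')) (at t)"
  unfolding has_real_derivative_iff_has_vector_derivative
  using bounded_bilinear.has_vector_derivative[OF bounded_bilinear_inner df dg] by (simp add: add.commute)

lemma normal_differentiable:
  fixes A B :: "real \<Rightarrow> real^3"
  assumes dA: "(A has_vector_derivative A') (at t)" and dB: "(B has_vector_derivative B') (at t)"
    and c: "cross3 (A t) (B t) \<noteq> 0"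
  shows "(\<lambda>s. (1 / norm (cross3 (A s) (B s))) *\<^sub>R cross3 (A s) (B s)) differentiable (at t)"
proof -
  have bb: "bounded_bilinear cross3" using bilinear_cross bilinear_conv_bounded_bilinear by blast
  have dC: "(\<lambda>s. cross3 (A s) (B s)) differentiable (at t)"
    using bounded_bilinear.has_vector_derivative[OF bb dA dB] differentiableI_vector by blast
  have dN: "(\<lambda>s. norm (cross3 (A s) (B s))) differentiable (at t)"
    using differentiable_chain_at[OF dC differentiable_norm_at[OF c]] by (simp add: o_def)
  have dI: "(\<lambda>s. 1 / norm (cross3 (A s) (B s))) differentiable (at t)"
    using dN c by (intro differentiable_divide) auto
  show ?thesis using dI dC by (rule differentiable_scaleR)
qed

lemma pv_cong:
  assumes "open D" "P \<in> D" "\<And>q. q \<in> D \<Longrightarrow> f q = g q"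
  shows "pv f P = pv g P"
proof -
  have S: "open {s. (fst P, s) \<in> D}" "snd P \<in> {s. (fst P, s) \<in> D}"
    using open_vline[OF assms(1)] assms(2) by auto
  have "(\<lambda>D'. ((\<lambda>s. f (fst P, s)) has_vector_derivative D') (at (snd P))) =
        (\<lambda>D'. ((\<lambda>s. g (fst P, s)) has_vector_derivative D') (at (snd P)))"
  proof (rule ext, rule iffI)
    fix D' assume "((\<lambda>s. f (fst P, s)) has_vector_derivative D') (at (snd P))"
    from has_vector_derivative_transform_within_open[OF this S] assms(3)
    show "((\<lambda>s. g (fst P, s)) has_vector_derivative D') (at (snd P))" by auto
  next
    fix D' assume "((\<lambda>s. g (fst P, s)) has_vector_derivative D') (at (snd P))"
    from has_vector_derivative_transform_within_open[OF this S] assms(3)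
    show "((\<lambda>s. f (fst P, s)) has_vector_derivative D') (at (snd P))" by auto
  qed
  then show ?thesis unfolding pv_def vector_derivative_def by simp
qed



theorem lemma4p3:
  fixes x :: "real \<times> real \<Rightarrow> real^3" and D :: "(real \<times> real) set"
    and f f' g g' \<Phi> \<Psi> :: "real \<Rightarrow> real" and I :: "real set"
    and \<nu> :: "real \<times> real \<Rightarrow> real"
  assumes "regular_surface x D"
    and "principal_params x D"
    and "strongly_regular x D"
    and "weingarten x D f f' g g' I \<nu>"
    and "\<forall>t\<in>I. (\<Phi> has_real_derivative f' t / (f t - g t)) (at t)"
    and "\<forall>t\<in>I. (\<Psi> has_real_derivative g' t / (g t - f t)) (at t)"
  shows "\<forall>(u, v)\<in>D.
           ((\<lambda>s. ln (sqrt (coefE x (u, s)) * exp (\<Phi> (\<nu> (u, s))))) has_real_derivative 0) (at v)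
         \<and> ((\<lambda>s. ln (sqrt (coefG x (s, v)) * exp (\<Psi> (\<nu> (s, v))))) has_real_derivative 0) (at u)"
proof -
  note reg = assms(1)[unfolded regular_surface_def]
  have oD: "open D" using reg by blast
  have cr: "\<And>q. q \<in> D \<Longrightarrow> cross3 (pu x q) (pv x q) \<noteq> 0" using reg by blast
  have C: "Ck (Suc (Suc (Suc 0))) x D" using reg by (simp add: numeral_3_eq_3)
  have dx1: "\<And>q. q\<in>D \<Longrightarrow> (\<lambda>s. x (s, snd q)) differentiable (at (fst q))"
   and dx2: "\<And>q. q\<in>D \<Longrightarrow> (\<lambda>s. x (fst q, s)) differentiable (at (snd q))"
   and dxu1: "\<And>q. q\<in>D \<Longrightarrow> (\<lambda>s. pu x (s, snd q)) differentiable (at (fst q))"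
   and dxu2: "\<And>q. q\<in>D \<Longrightarrow> (\<lambda>s. pu x (fst q, s)) differentiable (at (snd q))"
   and dxv1: "\<And>q. q\<in>D \<Longrightarrow> (\<lambda>s. pv x (s, snd q)) differentiable (at (fst q))"
   and dxv2: "\<And>q. q\<in>D \<Longrightarrow> (\<lambda>s. pv x (fst q, s)) differentiable (at (snd q))"
   and dxuu1: "\<And>q. q\<in>D \<Longrightarrow> (\<lambda>s. pu (pu x) (s, snd q)) differentiable (at (fst q))"
   and dxuu2: "\<And>q. q\<in>D \<Longrightarrow> (\<lambda>s. pu (pu x) (fst q, s)) differentiable (at (snd q))"
   and dxuv1: "\<And>q. q\<in>D \<Longrightarrow> (\<lambda>s. pv (pu x) (s, snd q)) differentiable (at (fst q))"
   and dxuv2: "\<And>q. q\<in>D \<Longrightarrow> (\<lambda>s. pv (pu x) (fst q, s)) differentiable (at (snd q))"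
   and dxvu1: "\<And>q. q\<in>D \<Longrightarrow> (\<lambda>s. pu (pv x) (s, snd q)) differentiable (at (fst q))"
   and dxvu2: "\<And>q. q\<in>D \<Longrightarrow> (\<lambda>s. pu (pv x) (fst q, s)) differentiable (at (snd q))"
   and dxvv1: "\<And>q. q\<in>D \<Longrightarrow> (\<lambda>s. pv (pv x) (s, snd q)) differentiable (at (fst q))"
   and dxvv2: "\<And>q. q\<in>D \<Longrightarrow> (\<lambda>s. pv (pv x) (fst q, s)) differentiable (at (snd q))"
   and c2a: "continuous_on D (pv (pu x))" and c2b: "continuous_on D (pu (pv x))"
   and c3a: "continuous_on D (pv (pu (pu x)))" and c3b: "continuous_on D (pu (pv (pu x)))"
   and c3c: "continuous_on D (pv (pu (pv x)))" and c3d: "continuous_on D (pu (pv (pv x)))"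
    using C by auto
  have sch1: "\<And>q. q \<in> D \<Longrightarrow> pv (pu x) q = pu (pv x) q"
    by (rule schwarz_vec[OF oD _ dx1 dx2 dxu2 dxv1 c2a c2b])
  have F: "\<And>q. q \<in> D \<Longrightarrow> pu x q \<bullet> pv x q = 0" and M: "\<And>q. q \<in> D \<Longrightarrow> pv (pu x) q \<bullet> unit_normal x q = 0"
    using assms(2) unfolding principal_params_def coefF_def coefM_def by auto
  have nn: "\<And>q. q \<in> D \<Longrightarrow> unit_normal x q \<bullet> unit_normal x q = 1"
  proof -
    fix q assume q: "q \<in> D"
    have "norm (unit_normal x q) = 1" using cr[OF q] unfolding unit_normal_def by simp
    then show "unit_normal x q \<bullet> unit_normal x q = 1" by (simp add: norm_eq_1)
  qed
  have nxu: "\<And>q. unit_normal x q \<bullet> pu x q = 0" and nxv: "\<And>q. unit_normal x q \<bullet> pv x q = 0"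
    unfolding unit_normal_def by (simp_all add: dot_cross_self inner_commute)
  note wein = assms(4)[unfolded weingarten_def]
  show ?thesis
  proof (intro ballI, clarify)
    fix u v assume P: "(u, v) \<in> D"
    have sch2: "pv (pu (pu x)) (u, v) = pu (pv (pu x)) (u, v)"
      by (rule schwarz_vec[OF oD P dxu1 dxu2 dxuu2 dxuv1 c3a c3b])
    have sch3: "pv (pu (pv x)) (u, v) = pu (pv (pv x)) (u, v)"
      by (rule schwarz_vec[OF oD P dxv1 dxv2 dxvu2 dxvv1 c3c c3d])
    have sch4: "pv (pv (pu x)) (u, v) = pv (pu (pv x)) (u, v)"
      by (rule pv_cong[OF oD P sch1])
    define xu where "xu = pu x (u, v)"
    define xv where "xv = pv x (u, v)"
    define xuu where "xuu = pu (pu x) (u, v)"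
    define xuv where "xuv = pv (pu x) (u, v)"
    define xvv where "xvv = pv (pv x) (u, v)"
    define n where "n = unit_normal x (u, v)"
    have sch1P: "pu (pv x) (u, v) = xuv" using sch1[OF P] xuv_def by simp
    have A1: "((\<lambda>s. pu x (u, s)) has_vector_derivative xuv) (at v)"
      using pv_works[OF dxu2[OF P]] xuv_def by simp
    have A2: "((\<lambda>s. pv x (u, s)) has_vector_derivative xvv) (at v)"
      using pv_works[OF dxv2[OF P]] xvv_def by simp
    have A3: "((\<lambda>s. pu (pu x) (u, s)) has_vector_derivative pv (pu (pu x)) (u, v)) (at v)"
      using pv_works[OF dxuu2[OF P]] by simp
    have A4: "((\<lambda>s. pv (pu x) (u, s)) has_vector_derivative pv (pv (pu x)) (u, v)) (at v)"
      using pv_works[OF dxuv2[OF P]] by simp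
    have A6: "((\<lambda>s. pv x (u, s)) has_vector_derivative xvv) (at v)" using A2 .
    have B1: "((\<lambda>s. pu x (s, v)) has_vector_derivative xuu) (at u)"
      using pu_works[OF dxu1[OF P]] xuu_def by simp
    have B2: "((\<lambda>s. pv x (s, v)) has_vector_derivative xuv) (at u)"
      using pu_works[OF dxv1[OF P]] sch1P by simp
    have B3: "((\<lambda>s. pv (pv x) (s, v)) has_vector_derivative pu (pv (pv x)) (u, v)) (at u)"
      using pu_works[OF dxvv1[OF P]] by simp
    have B4: "((\<lambda>s. pv (pu x) (s, v)) has_vector_derivative pu (pv (pu x)) (u, v)) (at u)"
      using pu_works[OF dxuv1[OF P]] by simp
    have crP: "cross3 xu xv \<noteq> 0" using cr[OF P] xu_def xv_def by simp
    have ndv: "(\<lambda>s. unit_normal x (u, s)) differentiable (at v)"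
      unfolding unit_normal_def using normal_differentiable[OF A1 A2] crP xu_def xv_def by simp
    have ndu: "(\<lambda>s. unit_normal x (s, v)) differentiable (at u)"
      unfolding unit_normal_def using normal_differentiable[OF B1 B2] crP xu_def xv_def by simp
    define nv where "nv = vector_derivative (\<lambda>s. unit_normal x (u, s)) (at v)"
    define nu where "nu = vector_derivative (\<lambda>s. unit_normal x (s, v)) (at u)"
    have NV: "((\<lambda>s. unit_normal x (u, s)) has_vector_derivative nv) (at v)"
      using ndv vector_derivative_works nv_def by blast
    have NU: "((\<lambda>s. unit_normal x (s, v)) has_vector_derivative nu) (at u)"
      using ndu vector_derivative_works nu_def by blast
    define Sv where "Sv = {s. (u, s) \<in> D}"
    define Su where "Su = {s. (s, v) \<in> D}"
    have Sv: "open Sv" "v \<in> Sv" using open_vline[OF oD] P Sv_def by auto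
    have Su: "open Su" "u \<in> Su" using open_uline[OF oD] P Su_def by auto
    have v1: "nv \<bullet> n + n \<bullet> nv = 0"
      using inner_const_deriv[OF NV NV Sv, of 1] nn n_def Sv_def by auto
    have v2: "nv \<bullet> xu + n \<bullet> xuv = 0"
      using inner_const_deriv[OF NV A1 Sv, of 0] nxu n_def xu_def by auto
    have v3: "nv \<bullet> xv + n \<bullet> xvv = 0"
      using inner_const_deriv[OF NV A2 Sv, of 0] nxv n_def xv_def by auto
    have v4: "xuv \<bullet> xv + xu \<bullet> xvv = 0"
      using inner_const_deriv[OF A1 A2 Sv, of 0] F xu_def xv_def Sv_def by auto
    have v5: "pv (pv (pu x)) (u, v) \<bullet> n + xuv \<bullet> nv = 0"
      using inner_const_deriv[OF A4 NV Sv, of 0] M n_def xuv_def Sv_def by auto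
    have u1: "nu \<bullet> n + n \<bullet> nu = 0"
      using inner_const_deriv[OF NU NU Su, of 1] nn n_def Su_def by auto
    have u2: "nu \<bullet> xv + n \<bullet> xuv = 0"
      using inner_const_deriv[OF NU B2 Su, of 0] nxv n_def xv_def by auto
    have u3: "nu \<bullet> xu + n \<bullet> xuu = 0"
      using inner_const_deriv[OF NU B1 Su, of 0] nxu n_def xu_def by auto
    have u4: "xuu \<bullet> xv + xu \<bullet> xuv = 0"
      using inner_const_deriv[OF B1 B2 Su, of 0] F xu_def xv_def Su_def by auto
    have u5: "pu (pv (pu x)) (u, v) \<bullet> n + xuv \<bullet> nu = 0"
      using inner_const_deriv[OF B4 NU Su, of 0] M n_def xuv_def Su_def by auto
    have nnP: "n \<bullet> n = 1" "n \<bullet> xu = 0" "n \<bullet> xv = 0" "xu \<bullet> xv = 0" "xuv \<bullet> n = 0"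
      using nn[OF P] nxu nxv F[OF P] M[OF P] n_def xu_def xv_def xuv_def by auto
    have codE: "pv (pu (pu x)) (u, v) \<bullet> n + xuu \<bullet> nv
        = (xu\<bullet>xuv) * ((xuu\<bullet>n)/(xu\<bullet>xu) + (xvv\<bullet>n)/(xv\<bullet>xv))"
      by (rule core_codazzi[OF crP nnP(1-4)]) (use v1 v2 v3 u1 u2 u3 nnP(5) u5 sch2 u4 in \<open>auto simp: inner_commute\<close>)
    have codG: "pu (pv (pv x)) (u, v) \<bullet> n + xvv \<bullet> nu
        = (xv\<bullet>xuv) * ((xvv\<bullet>n)/(xv\<bullet>xv) + (xuu\<bullet>n)/(xu\<bullet>xu))"
    proof (rule core_codazzi)
      show "cross3 xv xu \<noteq> 0" using crP cross_skew[of xv xu] by auto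
    qed (use nnP v1 v2 v3 u1 u2 u3 v4 v5 sch3 sch4 in \<open>auto simp: inner_commute\<close>)
    have nuI: "\<And>q. q \<in> D \<Longrightarrow> \<nu> q \<in> I" using wein by blast
    have nud1: "(\<lambda>s. \<nu> (s, v)) differentiable (at u)" and nud2: "(\<lambda>s. \<nu> (u, s)) differentiable (at v)"
      using wein P by auto
    have nu12: "\<And>q. q \<in> D \<Longrightarrow> nu1 x q = f (\<nu> q) \<and> nu2 x q = g (\<nu> q)" using wein by blast
    have fg: "(f has_real_derivative f' (\<nu> (u, v))) (at (\<nu> (u, v)))"
        "(g has_real_derivative g' (\<nu> (u, v))) (at (\<nu> (u, v)))" "f (\<nu> (u, v)) - g (\<nu> (u, v)) > 0"
      using wein nuI[OF P] by auto
    have dPhi: "(\<Phi> has_real_derivative f' (\<nu> (u, v)) / (f (\<nu> (u, v)) - g (\<nu> (u, v)))) (at (\<nu> (u, v)))"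
      using assms(5) nuI[OF P] by blast
    have dPsi: "(\<Psi> has_real_derivative g' (\<nu> (u, v)) / (g (\<nu> (u, v)) - f (\<nu> (u, v)))) (at (\<nu> (u, v)))"
      using assms(6) nuI[OF P] by blast
    have dn_v: "((\<lambda>s. \<nu> (u, s)) has_real_derivative pv \<nu> (u, v)) (at v)"
      using pv_works[of \<nu> "(u, v)"] nud2 by (simp add: has_real_derivative_iff_has_vector_derivative)
    have dn_u: "((\<lambda>s. \<nu> (s, v)) has_real_derivative pu \<nu> (u, v)) (at u)"
      using pu_works[of \<nu> "(u, v)"] nud1 by (simp add: has_real_derivative_iff_has_vector_derivative)
    have Epos: "\<And>q. q \<in> D \<Longrightarrow> coefE x q > 0" and Gpos: "\<And>q. q \<in> D \<Longrightarrow> coefG x q > 0"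
      unfolding coefE_def coefG_def using cr by (auto simp: inner_gt_zero_iff, metis cross_zero_left, metis cross_zero_right)
    have dEv: "((\<lambda>s. coefE x (u, s)) has_real_derivative (xuv \<bullet> xu + xu \<bullet> xuv)) (at v)"
      unfolding coefE_def using inner_deriv[OF A1 A1] xu_def by simp
    have dLv: "((\<lambda>s. coefL x (u, s)) has_real_derivative (pv (pu (pu x)) (u, v) \<bullet> n + xuu \<bullet> nv)) (at v)"
      unfolding coefL_def using inner_deriv[OF A3 NV] xuu_def n_def by simp
    have dGu: "((\<lambda>s. coefG x (s, v)) has_real_derivative (xuv \<bullet> xv + xv \<bullet> xuv)) (at u)"
      unfolding coefG_def using inner_deriv[OF B2 B2] xv_def by simp
    have dNu: "((\<lambda>s. coefN x (s, v)) has_real_derivative (pu (pv (pv x)) (u, v) \<bullet> n + xvv \<bullet> nu)) (at u)"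
      unfolding coefN_def using inner_deriv[OF B3 NU] xvv_def n_def by simp
    have LE: "coefL x (u, v) / coefE x (u, v) = f (\<nu> (u, v))" and NG: "coefN x (u, v) / coefG x (u, v) = g (\<nu> (u, v))"
      using nu12[OF P] unfolding nu1_def nu2_def by auto
    have LE': "(xuu\<bullet>n)/(xu\<bullet>xu) = f (\<nu> (u, v))" using LE unfolding coefL_def coefE_def xuu_def n_def xu_def .
    have NG': "(xvv\<bullet>n)/(xv\<bullet>xv) = g (\<nu> (u, v))" using NG unfolding coefN_def coefG_def xvv_def n_def xv_def .
    have goal1: "((\<lambda>s. ln (sqrt (coefE x (u, s)) * exp (\<Phi> (\<nu> (u, s))))) has_real_derivative 0) (at v)"
    proof (rule final_step[OF Sv dEv dLv dn_v, where h=f and h'="f' (\<nu> (u, v))" and k="g (\<nu> (u, v))"])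
      show "\<And>s. s \<in> Sv \<Longrightarrow> 0 < coefE x (u, s)" using Epos Sv_def by auto
      show "\<And>s. s \<in> Sv \<Longrightarrow> coefL x (u, s) / coefE x (u, s) = f (\<nu> (u, s))"
        using nu12 Sv_def unfolding nu1_def by auto
      show "(f has_real_derivative f' (\<nu> (u, v))) (at (\<nu> (u, v)))" using fg by blast
      show "(\<Phi> has_real_derivative f' (\<nu> (u, v)) / (f (\<nu> (u, v)) - g (\<nu> (u, v)))) (at (\<nu> (u, v)))"
        using dPhi .
      show "f (\<nu> (u, v)) - g (\<nu> (u, v)) \<noteq> 0" using fg by simp
      show "pv (pu (pu x)) (u, v) \<bullet> n + xuu \<bullet> nv =
          (xuv \<bullet> xu + xu \<bullet> xuv) / 2 * (coefL x (u, v) / coefE x (u, v) + g (\<nu> (u, v)))"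
        unfolding codE LE using LE' NG' by (simp add: inner_commute)
    qed
    have goal2: "((\<lambda>s. ln (sqrt (coefG x (s, v)) * exp (\<Psi> (\<nu> (s, v))))) has_real_derivative 0) (at u)"
    proof (rule final_step[OF Su dGu dNu dn_u, where h=g and h'="g' (\<nu> (u, v))" and k="f (\<nu> (u, v))"])
      show "\<And>s. s \<in> Su \<Longrightarrow> 0 < coefG x (s, v)" using Gpos Su_def by auto
      show "\<And>s. s \<in> Su \<Longrightarrow> coefN x (s, v) / coefG x (s, v) = g (\<nu> (s, v))"
        using nu12 Su_def unfolding nu2_def by auto
      show "(g has_real_derivative g' (\<nu> (u, v))) (at (\<nu> (u, v)))" using fg by blast
      show "(\<Psi> has_real_derivative g' (\<nu> (u, v)) / (g (\<nu> (u, v)) - f (\<nu> (u, v)))) (at (\<nu> (u, v)))"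
        using dPsi .
      show "g (\<nu> (u, v)) - f (\<nu> (u, v)) \<noteq> 0" using fg by simp
      show "pu (pv (pv x)) (u, v) \<bullet> n + xvv \<bullet> nu =
          (xuv \<bullet> xv + xv \<bullet> xuv) / 2 * (coefN x (u, v) / coefG x (u, v) + f (\<nu> (u, v)))"
        unfolding codG NG using LE' NG' by (simp add: inner_commute)
    qed
    show "((\<lambda>s. ln (sqrt (coefE x (u, s)) * exp (\<Phi> (\<nu> (u, s))))) has_real_derivative 0) (at v)
         \<and> ((\<lambda>s. ln (sqrt (coefG x (s, v)) * exp (\<Psi> (\<nu> (s, v))))) has_real_derivative 0) (at u)"
      using goal1 goal2 by blast
  qed
qed

end
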